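(* Let $q$ be a prime, $r\geq 2$ and $k\geq 4$, and let $(f_1,f_2,\dots,f_r)$ be an $r$-tuple of Latin hypercubes of order $q$ and dimension $k$ (not necessarily mutually orthogonal). Suppose that for every two distinct indices $i,j\in[r]$ and every way of fixing the same $k-3$ of the $k$ arguments to the same values in both $f_i$ and $f_j$, the resulting pair of Latin hypercubes of dimension $3$ is a linear pair. Then $(f_1,f_2,\dots,f_r)$ is a linear $r$-tuple of Latin hypercubes.
   Context: $[m]=\{1,\dots,m\}$. A Latin hypercube of order $q$ and dimension $k$ is a function $f:\mathbb{F}_q^k\to\mathbb{F}_q$ such that, whenever any $k-1$ of the arguments are fixed, the resulting function of the remaining argument is a bijection of $\mathbb{F}_q$ (equivalently, every $q\times q$ subarray obtained by fixing $k-2$ arguments is a Latin square). Fixing some arguments of a Latin hypercube to constants yields a Latin hypercube of smaller dimension in the remaining arguments. An $r$-tuple $(f_1,\dots,f_r)$ of Latin hypercubes of order $q$ and dimension $k$ is linear if there exist permutations $\alpha_1,\dots,\alpha_k,\beta_1,\dots,\beta_r$ of $\mathbb{F}_q$ and coefficients $a_{i,j}\in\mathbb{F}_q$ ($i\in[r]$, $j\in[k]$) such that for every $i\in[r]$ and all $x\in\mathbb{F}_q^k$, $\beta_i(f_i(x_1,\dots,x_k))=a_{i,1}\alpha_1(x_1)+\cdots+a_{i,k}\alpha_k(x_k)$. A linear pair is a linear $2$-tuple. *)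

theory Defs
  imports "HOL-Library.FuncSet" "HOL-Computational_Algebra.Primes"
begin

text \<open>Points of F_q^I are functions from the finite index set I into the field,
  extensional outside I (PiE).\<close>

definition latin_hypercube :: "nat set \<Rightarrow> ((nat \<Rightarrow> 'a) \<Rightarrow> 'a) \<Rightarrow> bool" where
  "latin_hypercube I f \<longleftrightarrow>
     (\<forall>x \<in> PiE I (\<lambda>_. UNIV). \<forall>i \<in> I. bij (\<lambda>t. f (x(i := t))))"

definition linear_tuple ::
  "nat set \<Rightarrow> nat set \<Rightarrow> (nat \<Rightarrow> (nat \<Rightarrow> 'a::field) \<Rightarrow> 'a) \<Rightarrow> bool" where
  "linear_tuple I R fs \<longleftrightarrow>
     (\<exists>(\<alpha> :: nat \<Rightarrow> 'a \<Rightarrow> 'a) (\<beta> :: nat \<Rightarrow> 'a \<Rightarrow> 'a) (a :: nat \<Rightarrow> nat \<Rightarrow> 'a).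
        (\<forall>j \<in> I. bij (\<alpha> j)) \<and> (\<forall>m \<in> R. bij (\<beta> m)) \<and>
        (\<forall>m \<in> R. \<forall>x \<in> PiE I (\<lambda>_. UNIV).
            \<beta> m (fs m x) = (\<Sum>j \<in> I. a m j * \<alpha> j (x j))))"

definition fix_args :: "nat set \<Rightarrow> (nat \<Rightarrow> 'a) \<Rightarrow> ((nat \<Rightarrow> 'a) \<Rightarrow> 'a) \<Rightarrow> (nat \<Rightarrow> 'a) \<Rightarrow> 'a" where
  "fix_args S c f = (\<lambda>y. f (\<lambda>j. if j \<in> S then y j else c j))"

end

theory Submission
  imports Defs "HOL-Number_Theory.Residues"
begin


lemma prime_field_elem:
  assumes "prime q" "card (UNIV :: 'a::{field,finite} set) = q"
  shows "\<exists>n. (u::'a) = of_nat n"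
proof -
  have d: "CHAR('a) dvd q" using CHAR_dvd_CARD[where 'a='a] assms by simp
  have "CHAR('a) \<noteq> 1"
    using of_nat_eq_0_iff_char_dvd[of 1, where 'a='a] by auto
  hence c: "CHAR('a) = q" using d assms(1) prime_nat_iff by blast
  have "inj_on (of_nat :: nat \<Rightarrow> 'a) {0..<q}"
  proof (rule inj_onI)
    fix a b assume ab: "a \<in> {0..<q}" "b \<in> {0..<q}" "(of_nat a :: 'a) = of_nat b"
    show "a = b"
    proof (rule ccontr)
      assume "a \<noteq> b"
      then consider "a < b" | "b < a" by linarith
      thus False
      proof cases
        case 1
        have "(of_nat (b - a) :: 'a) = 0" using ab(3) 1 by (simp add: of_nat_diff)
        hence "q dvd b - a" using c of_nat_eq_0_iff_char_dvd by metis
        thus False using 1 ab by (simp add: nat_dvd_not_less)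
      next
        case 2
        have "(of_nat (a - b) :: 'a) = 0" using ab(3) 2 by (simp add: of_nat_diff)
        hence "q dvd a - b" using c of_nat_eq_0_iff_char_dvd by metis
        thus False using 2 ab by (simp add: nat_dvd_not_less)
      qed
    qed
  qed
  hence "card ((of_nat :: nat \<Rightarrow> 'a) ` {0..<q}) = q" by (simp add: card_image)
  hence "(of_nat :: nat \<Rightarrow> 'a) ` {0..<q} = UNIV"
    using assms(2) by (metis card_subset_eq finite_UNIV subset_UNIV)
  thus ?thesis by (metis UNIV_I imageE)
qed

lemma add_scal:
  assumes "prime q" "card (UNIV :: 'a::{field,finite} set) = q"
    and add: "\<And>u v. T (u + v) = T u + T v"
  shows "T (u::'a) = T 1 * u"
proof -
  have "T 0 = T 0 + T 0" using add[of 0 0] by simp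
  hence "T 0 = 0" by (metis add_left_cancel add.right_neutral)
  have n: "T (of_nat n) = of_nat n * T 1" for n
    by (induction n) (simp_all add: \<open>T 0 = 0\<close> add algebra_simps)
  obtain n where "u = of_nat n" using prime_field_elem assms(1,2) by blast
  thus ?thesis using n by simp
qed



lemma sum_upd:
  assumes "finite L" "i \<in> L"
  shows "(\<Sum>k\<in>L. A k ((w(i:=a)) k)) = (\<Sum>k\<in>L. A k (w k)) + (A i a - A i (w i) :: 'a::ab_group_add)"
proof -
  have "(\<Sum>k\<in>L. A k ((w(i:=a)) k)) = A i a + (\<Sum>k\<in>L-{i}. A k ((w(i:=a)) k))"
    using assms by (simp add: sum.remove)
  also have "(\<Sum>k\<in>L-{i}. A k ((w(i:=a)) k)) = (\<Sum>k\<in>L-{i}. A k (w k))"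
    by (rule sum.cong) auto
  also have "(\<Sum>k\<in>L. A k (w k)) = A i (w i) + (\<Sum>k\<in>L-{i}. A k (w k))"
    using assms by (simp add: sum.remove)
  ultimately show ?thesis by (simp add: algebra_simps)
qed

lemma sum_split:
  assumes "finite I" "S \<subseteq> I" "\<forall>i\<in>I-S. x i = z i"
  shows "(\<Sum>i\<in>I. g i (x i)) = (\<Sum>i\<in>S. g i (x i)) + (\<Sum>i\<in>I-S. g i (z i) :: 'a::comm_monoid_add)"
proof -
  have "(\<Sum>i\<in>I. g i (x i)) = (\<Sum>i\<in>S. g i (x i)) + (\<Sum>i\<in>I-S. g i (x i))"
    using assms by (metis add.commute sum.subset_diff)
  also have "(\<Sum>i\<in>I-S. g i (x i)) = (\<Sum>i\<in>I-S. g i (z i))"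
    using assms by (intro sum.cong) auto
  finally show ?thesis .
qed

lemma uniq:
  fixes f :: "(nat \<Rightarrow> 'a::{field,finite}) \<Rightarrow> 'a"
    and A B :: "nat \<Rightarrow> 'a \<Rightarrow> 'a" and \<beta> bb :: "'a \<Rightarrow> 'a"
  assumes pq: "prime q" "card (UNIV :: 'a set) = q"
    and fin: "finite L" and jl: "j \<in> L" "l \<in> L" "j \<noteq> l"
    and wP: "\<forall>a b. w(j:=a, l:=b) \<in> P" "\<forall>i\<in>L. \<forall>a. w(i:=a) \<in> P"
    and injb: "inj \<beta>" and sj: "surj (A j)" and sl: "surj (A l)"
    and repA: "\<forall>x\<in>P. \<beta> (f x) = (\<Sum>i\<in>L. A i (x i)) + K1"
    and repB: "\<forall>x\<in>P. bb (f x) = (\<Sum>i\<in>L. B i (x i)) + K2"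
  shows "\<exists>c. (\<forall>s. bb (inv_into UNIV \<beta> ((\<Sum>i\<in>L. A i (w i)) + K1 + s)) = (\<Sum>i\<in>L. B i (w i)) + K2 + c * s)
            \<and> (\<forall>i\<in>L. \<forall>a. B i a - B i (w i) = c * (A i a - A i (w i)))"
proof -
  define E where "E = (\<Sum>i\<in>L. A i (w i)) + K1"
  define E' where "E' = (\<Sum>i\<in>L. B i (w i)) + K2"
  define Th where "Th s = bb (inv_into UNIV \<beta> (E + s)) - E'" for s
  have key: "bb (inv_into UNIV \<beta> ((\<Sum>i\<in>L. A i (x i)) + K1)) = (\<Sum>i\<in>L. B i (x i)) + K2" if "x \<in> P" for x
    using repA repB that injb by (metis inv_f_f)
  have F1: "Th (A i a - A i (w i)) = B i a - B i (w i)" if "i \<in> L" for i a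
  proof -
    have "w(i:=a) \<in> P" using wP that by blast
    note k = key[OF this]
    have a1: "(\<Sum>k\<in>L. A k ((w(i:=a)) k)) + K1 = E + (A i a - A i (w i))"
      by (subst sum_upd[OF fin that]) (simp add: E_def algebra_simps)
    have b1: "(\<Sum>k\<in>L. B k ((w(i:=a)) k)) + K2 = E' + (B i a - B i (w i))"
      by (subst sum_upd[OF fin that]) (simp add: E'_def algebra_simps)
    show ?thesis unfolding Th_def using k a1 b1 by (metis add_diff_cancel_left')
  qed
  have F2: "Th ((A j a - A j (w j)) + (A l b - A l (w l))) = (B j a - B j (w j)) + (B l b - B l (w l))" for a b
  proof -
    have "w(j:=a, l:=b) \<in> P" using wP by blast
    note k = key[OF this]
    have e1: "(\<Sum>i\<in>L. C i ((w(j:=a, l:=b)) i)) = (\<Sum>i\<in>L. C i (w i)) + ((C j a - C j (w j)) + (C l b - C l (w l)))"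
      for C :: "nat \<Rightarrow> 'a \<Rightarrow> 'a"
      apply (subst sum_upd[OF fin jl(2)])
      apply (subst sum_upd[OF fin jl(1)])
      using jl(3) by (simp add: algebra_simps)
    have a1: "(\<Sum>k\<in>L. A k ((w(j:=a, l:=b)) k)) + K1 = E + ((A j a - A j (w j)) + (A l b - A l (w l)))"
      unfolding e1 by (simp add: E_def algebra_simps)
    have b1: "(\<Sum>k\<in>L. B k ((w(j:=a, l:=b)) k)) + K2 = E' + ((B j a - B j (w j)) + (B l b - B l (w l)))"
      unfolding e1 by (simp add: E'_def algebra_simps)
    show ?thesis unfolding Th_def using k a1 b1 by (metis add_diff_cancel_left')
  qed
  have addTh: "Th (u + u') = Th u + Th u'" for u u'
  proof -
    obtain a where a: "A j a = u + A j (w j)" using sj by (metis surjD)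
    obtain b where b: "A l b = u' + A l (w l)" using sl by (metis surjD)
    have "Th (u + u') = Th ((A j a - A j (w j)) + (A l b - A l (w l)))" using a b by simp
    also have "\<dots> = Th (A j a - A j (w j)) + Th (A l b - A l (w l))"
      using F2 F1 jl by simp
    finally show ?thesis using a b by simp
  qed
  have lin: "Th s = Th 1 * s" for s using add_scal[OF pq addTh] .
  show ?thesis
  proof (intro exI conjI allI ballI)
    fix s show "bb (inv_into UNIV \<beta> ((\<Sum>i\<in>L. A i (w i)) + K1 + s)) = (\<Sum>i\<in>L. B i (w i)) + K2 + Th 1 * s"
      using lin[of s] unfolding Th_def E_def E'_def by (simp add: algebra_simps)
  next
    fix i a assume "i \<in> L"
    thus "B i a - B i (w i) = Th 1 * (A i a - A i (w i))" using F1 lin by metis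
  qed
qed



definition Rep :: "nat set \<Rightarrow> ((nat \<Rightarrow> 'a) \<Rightarrow> 'a) \<Rightarrow> nat set \<Rightarrow> (nat \<Rightarrow> 'a) \<Rightarrow> (nat \<Rightarrow> 'a \<Rightarrow> 'a) \<Rightarrow> ('a \<Rightarrow> 'a::field) \<Rightarrow> bool" where
  "Rep I f K z \<alpha> \<beta> \<longleftrightarrow> (\<forall>j\<in>K. bij (\<alpha> j)) \<and> bij \<beta> \<and>
     (\<forall>x\<in>PiE I (\<lambda>_. UNIV). (\<forall>i\<in>I-K. x i = z i) \<longrightarrow> \<beta> (f x) = (\<Sum>j\<in>K. \<alpha> j (x j)))"

lemma bij_scale: "(a::'a::field) \<noteq> 0 \<Longrightarrow> bij g \<Longrightarrow> bij (\<lambda>t. a * g t)"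
proof -
  assume a: "a \<noteq> 0" and g: "bij g"
  have "bij (\<lambda>t::'a. a * t)"
    by (rule o_bij[where g="\<lambda>t. t / a"]) (use a in \<open>auto simp: fun_eq_iff\<close>)
  from bij_comp[OF g this] show ?thesis by (simp add: comp_def)
qed

lemma bij_transl: "bij g \<Longrightarrow> bij (\<lambda>t. g t + (c::'a::ab_group_add))"
proof -
  assume g: "bij g"
  have "bij (\<lambda>t::'a. t + c)"
    by (rule o_bij[where g="\<lambda>t. t - c"]) (auto simp: fun_eq_iff)
  from bij_comp[OF g this] show ?thesis by (simp add: comp_def)
qed

lemma nonconst: "bij (g::'a \<Rightarrow> 'b::field) \<Longrightarrow> \<exists>a. g a - g b \<noteq> 0"
proof -
  assume "bij g"
  then obtain a where "g a = g b + 1" by (metis bij_pointE)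
  thus ?thesis by (intro exI[of _ a]) simp
qed

lemma upd_PiE: "x \<in> PiE I (\<lambda>_. UNIV) \<Longrightarrow> i \<in> I \<Longrightarrow> x(i:=a) \<in> PiE I (\<lambda>_. UNIV)"
  by (auto simp: PiE_def extensional_def)

lemma glue:
  fixes f :: "(nat \<Rightarrow> 'a::{field,finite}) \<Rightarrow> 'a"
  assumes pq: "prime q" "card (UNIV :: 'a set) = q"
    and fin: "finite I" and KI: "K \<subseteq> I" and ps: "p \<in> K" "s \<in> K" "p \<noteq> s"
    and z: "z \<in> PiE I (\<lambda>_. UNIV)"
    and jl: "j \<in> K - {p,s}" "l \<in> K - {p,s}" "j \<noteq> l"
    and RA: "Rep I f (K-{p}) (z(p:=v)) \<alpha> \<beta>"
    and RB: "Rep I f (K-{s}) (z(s:=0)) \<delta> \<gamma>"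
  shows "\<exists>c. \<forall>i\<in>K-{p,s}. \<forall>a. \<delta> i a - \<delta> i (z i) = c * (\<alpha> i a - \<alpha> i (z i))"
proof -
  define P where "P = {x\<in>PiE I (\<lambda>_. UNIV). (\<forall>i\<in>I-K. x i = z i) \<and> x p = v \<and> x s = 0}"
  define w where "w = z(p:=v, s:=0)"
  define L where "L = K - {p,s}"
  have finK: "finite K" using fin KI finite_subset by blast
  have finL: "finite L" using finK L_def by simp
  have wPi: "w \<in> PiE I (\<lambda>_. UNIV)" unfolding w_def using z ps KI by (intro upd_PiE) auto
  have wP1: "\<forall>a b. w(j:=a, l:=b) \<in> P"
    using wPi jl ps KI unfolding P_def w_def by (auto intro!: upd_PiE)
  have wP2: "\<forall>i\<in>L. \<forall>a. w(i:=a) \<in> P"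
    using wPi ps KI unfolding P_def w_def L_def by (auto intro!: upd_PiE)
  have bA: "\<forall>i\<in>K-{p}. bij (\<alpha> i)" "bij \<beta>" using RA unfolding Rep_def by auto
  have bB: "bij \<gamma>" using RB unfolding Rep_def by auto
  have s1: "K - {p} = insert s L" "s \<notin> L" using ps unfolding L_def by auto
  have s2: "K - {s} = insert p L" "p \<notin> L" using ps unfolding L_def by auto
  have repA: "\<forall>x\<in>P. \<beta> (f x) = (\<Sum>i\<in>L. \<alpha> i (x i)) + \<alpha> s 0"
  proof
    fix x assume x: "x \<in> P"
    have "\<forall>i\<in>I-(K-{p}). x i = (z(p:=v)) i" using x unfolding P_def by auto
    hence "\<beta> (f x) = (\<Sum>i\<in>K-{p}. \<alpha> i (x i))"
      using RA x unfolding Rep_def P_def by blast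
    also have "\<dots> = \<alpha> s (x s) + (\<Sum>i\<in>L. \<alpha> i (x i))"
      unfolding s1 using s1(2) finL by simp
    finally show "\<beta> (f x) = (\<Sum>i\<in>L. \<alpha> i (x i)) + \<alpha> s 0" using x unfolding P_def by simp
  qed
  have repB: "\<forall>x\<in>P. \<gamma> (f x) = (\<Sum>i\<in>L. \<delta> i (x i)) + \<delta> p v"
  proof
    fix x assume x: "x \<in> P"
    have "\<forall>i\<in>I-(K-{s}). x i = (z(s:=0)) i" using x unfolding P_def by auto
    hence "\<gamma> (f x) = (\<Sum>i\<in>K-{s}. \<delta> i (x i))"
      using RB x unfolding Rep_def P_def by blast
    also have "\<dots> = \<delta> p (x p) + (\<Sum>i\<in>L. \<delta> i (x i))"
      unfolding s2 using s2(2) finL by simp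
    finally show "\<gamma> (f x) = (\<Sum>i\<in>L. \<delta> i (x i)) + \<delta> p v" using x unfolding P_def by simp
  qed
  have "j \<in> L" "l \<in> L" using jl L_def by auto
  have sj: "surj (\<alpha> j)" "surj (\<alpha> l)" using bA jl by (auto simp: bij_is_surj)
  from uniq[OF pq finL \<open>j \<in> L\<close> \<open>l \<in> L\<close> jl(3) wP1 wP2 bij_is_inj[OF bA(2)] sj repA repB]
  obtain c where "\<forall>i\<in>L. \<forall>a. \<delta> i a - \<delta> i (w i) = c * (\<alpha> i a - \<alpha> i (w i))" by blast
  moreover have "\<forall>i\<in>L. w i = z i" unfolding w_def L_def by auto
  ultimately show ?thesis unfolding L_def by auto
qed



lemma three_elems:
  assumes "finite J" "3 \<le> card J"
  obtains a b c where "a \<in> J" "b \<in> J" "c \<in> J" "a \<noteq> b" "b \<noteq> c" "a \<noteq> c"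
proof -
  obtain S where "S \<subseteq> J" "card S = 3" using obtain_subset_with_card_n assms by metis
  thus ?thesis using that card_3_iff by (metis insert_subset)
qed

lemma rep_all:
  fixes f :: "(nat \<Rightarrow> 'a::{field,finite}) \<Rightarrow> 'a"
  assumes pq: "prime q" "card (UNIV :: 'a set) = q"
    and fin: "finite I"
    and H3: "\<And>S z. S \<subseteq> I \<Longrightarrow> card S = 3 \<Longrightarrow> z \<in> PiE I (\<lambda>_. UNIV) \<Longrightarrow> \<exists>\<alpha> \<beta>. Rep I f S z \<alpha> \<beta>"
  shows "card K = n \<Longrightarrow> K \<subseteq> I \<Longrightarrow> 3 \<le> n \<Longrightarrow> z \<in> PiE I (\<lambda>_. UNIV) \<Longrightarrow> \<exists>\<alpha> \<beta>. Rep I f K z \<alpha> \<beta>"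
proof (induction n arbitrary: K z)
  case 0 thus ?case by simp
next
  case (Suc n)
  note KI = \<open>K \<subseteq> I\<close> and z = \<open>z \<in> PiE I (\<lambda>_. UNIV)\<close>
  show ?case
  proof (cases "Suc n = 3")
    case True thus ?thesis using H3 Suc.prems by auto
  next
    case False
    hence n3: "3 \<le> n" using Suc.prems by simp
    have finK: "finite K" using fin KI finite_subset by blast
    have "K \<noteq> {}" using Suc.prems by auto
    then obtain p where p: "p \<in> K" by blast
    define J where "J = K - {p}"
    have cJ: "card J = n" unfolding J_def using Suc.prems p finK by simp
    have finJ: "finite J" using finK J_def by simp
    have c3: "3 \<le> card J" using cJ n3 by simp
    obtain p1 p2 i0 where pi: "p1 \<in> J" "p2 \<in> J" "i0 \<in> J" "p1 \<noteq> p2" "p2 \<noteq> i0" "p1 \<noteq> i0"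
      by (rule three_elems[OF finJ c3])
    have pJ: "p \<notin> J" "J \<subseteq> K" "J \<subseteq> I" using J_def KI by auto
    have "\<forall>v. \<exists>\<alpha> \<beta>. Rep I f J (z(p:=v)) \<alpha> \<beta>"
      proof
      fix v have "z(p:=v) \<in> PiE I (\<lambda>_. UNIV)" using z p KI by (intro upd_PiE) auto
      thus "\<exists>\<alpha> \<beta>. Rep I f J (z(p:=v)) \<alpha> \<beta>" using Suc.IH[OF cJ pJ(3) n3] by blast
    qed
    hence "\<exists>al. \<forall>v. \<exists>\<beta>. Rep I f J (z(p:=v)) (al v) \<beta>" by (rule choice)
    then obtain al where "\<forall>v. \<exists>\<beta>. Rep I f J (z(p:=v)) (al v) \<beta>" ..
    hence "\<exists>be. \<forall>v. Rep I f J (z(p:=v)) (al v) (be v)" by (rule choice)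
    then obtain be where "\<forall>v. Rep I f J (z(p:=v)) (al v) (be v)" ..
    hence RJ: "\<And>v. Rep I f J (z(p:=v)) (al v) (be v)" by blast
    have c1: "card (K - {p1}) = n" "card (K - {p2}) = n"
      using Suc.prems pi pJ finK by auto
    obtain \<delta>1 \<gamma>1 where R1: "Rep I f (K-{p1}) (z(p1:=0)) \<delta>1 \<gamma>1"
      proof -
      have "z(p1:=0) \<in> PiE I (\<lambda>_. UNIV)" using z pi pJ by (intro upd_PiE) auto
      moreover have "K - {p1} \<subseteq> I" using KI by auto
      ultimately show ?thesis using Suc.IH[OF c1(1) _ n3] that by blast
    qed
    obtain \<delta>2 \<gamma>2 where R2: "Rep I f (K-{p2}) (z(p2:=0)) \<delta>2 \<gamma>2"
      proof -
      have "z(p2:=0) \<in> PiE I (\<lambda>_. UNIV)" using z pi pJ by (intro upd_PiE) auto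
      moreover have "K - {p2} \<subseteq> I" using KI by auto
      ultimately show ?thesis using Suc.IH[OF c1(2) _ n3] that by blast
    qed
    have bal: "\<And>v i. i \<in> J \<Longrightarrow> bij (al v i)" "\<And>v. bij (be v)" using RJ unfolding Rep_def by auto
    have bd1: "\<And>i. i \<in> K - {p1} \<Longrightarrow> bij (\<delta>1 i)" using R1 unfolding Rep_def by auto
    have bd2: "\<And>i. i \<in> K - {p2} \<Longrightarrow> bij (\<delta>2 i)" using R2 unfolding Rep_def by auto
    have g1: "\<exists>c. \<forall>i\<in>K-{p,p1}. \<forall>a. \<delta>1 i a - \<delta>1 i (z i) = c * (al v i a - al v i (z i))" for v
    proof -
      have "p1 \<in> K" "p \<noteq> p1" "p2 \<in> K - {p,p1}" "i0 \<in> K - {p,p1}" using pi pJ by auto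
      from glue[OF pq fin KI p this(1,2) z this(3,4) pi(5) RJ[of v, unfolded J_def] R1] show ?thesis .
    qed
    have g2: "\<exists>c. \<forall>i\<in>K-{p,p2}. \<forall>a. \<delta>2 i a - \<delta>2 i (z i) = c * (al v i a - al v i (z i))" for v
    proof -
      have "p2 \<in> K" "p \<noteq> p2" "p1 \<in> K - {p,p2}" "i0 \<in> K - {p,p2}" using pi pJ by auto
      from glue[OF pq fin KI p this(1,2) z this(3,4) pi(6) RJ[of v, unfolded J_def] R2] show ?thesis .
    qed
    have mu: "\<exists>\<mu>. \<forall>i\<in>J. \<forall>a. al v i a - al v i (z i) = \<mu> * (al 0 i a - al 0 i (z i))" for v
    proof -
      have ratio: "\<exists>\<mu>. \<forall>i\<in>K-{p,s}. \<forall>a. al v i a - al v i (z i) = \<mu> * (al 0 i a - al 0 i (z i))"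
        if gs: "\<And>v. \<exists>c. \<forall>i\<in>K-{p,s}. \<forall>a. \<delta> i a - \<delta> i (z i) = c * (al v i a - al v i (z i))"
          and bd: "bij (\<delta> i0)" and i0s: "i0 \<in> K-{p,s}" for s \<delta>
      proof -
        obtain c where c: "\<forall>i\<in>K-{p,s}. \<forall>a. \<delta> i a - \<delta> i (z i) = c * (al v i a - al v i (z i))"
          using gs by blast
        obtain c0 where c0: "\<forall>i\<in>K-{p,s}. \<forall>a. \<delta> i a - \<delta> i (z i) = c0 * (al 0 i a - al 0 i (z i))"
          using gs by blast
        obtain a0 where a0: "\<delta> i0 a0 - \<delta> i0 (z i0) \<noteq> 0" using nonconst[OF bd] by blast
        have "\<delta> i0 a0 - \<delta> i0 (z i0) = c * (al v i0 a0 - al v i0 (z i0))" using c i0s by blast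
        hence "c \<noteq> 0" using a0 by auto
        show ?thesis
        proof (intro exI[of _ "c0 / c"] ballI allI)
          fix i a assume i: "i \<in> K-{p,s}"
          have e1: "\<delta> i a - \<delta> i (z i) = c * (al v i a - al v i (z i))" using c i by blast
          have e2: "\<delta> i a - \<delta> i (z i) = c0 * (al 0 i a - al 0 i (z i))" using c0 i by blast
          from e1 e2 have "c * (al v i a - al v i (z i)) = c0 * (al 0 i a - al 0 i (z i))" by simp
          thus "al v i a - al v i (z i) = c0 / c * (al 0 i a - al 0 i (z i))"
            using \<open>c \<noteq> 0\<close> by (simp add: field_simps)
        qed
      qed
      have "p1 \<in> K - {p2}" "i0 \<in> K-{p1}" "i0 \<in> K-{p2}" "i0 \<in> K-{p,p1}" "i0 \<in> K-{p,p2}" using pi pJ by auto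
      note ii = this
      obtain m1 where m1: "\<forall>i\<in>K-{p,p1}. \<forall>a. al v i a - al v i (z i) = m1 * (al 0 i a - al 0 i (z i))"
        using ratio[OF g1 bd1[OF ii(2)] ii(4)] by blast
      obtain m2 where m2: "\<forall>i\<in>K-{p,p2}. \<forall>a. al v i a - al v i (z i) = m2 * (al 0 i a - al 0 i (z i))"
        using ratio[OF g2 bd2[OF ii(3)] ii(5)] by blast
      obtain a1 where a1: "al 0 i0 a1 - al 0 i0 (z i0) \<noteq> 0" using nonconst[OF bal(1)[OF pi(3)]] by blast
      have "al v i0 a1 - al v i0 (z i0) = m1 * (al 0 i0 a1 - al 0 i0 (z i0))" using m1 ii(4) by blast
      moreover have "al v i0 a1 - al v i0 (z i0) = m2 * (al 0 i0 a1 - al 0 i0 (z i0))" using m2 ii(5) by blast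
      ultimately have "m1 = m2" using a1 by simp
      show ?thesis
      proof (intro exI[of _ m1] ballI allI)
        fix i a assume i: "i \<in> J"
        show "al v i a - al v i (z i) = m1 * (al 0 i a - al 0 i (z i))"
        proof (cases "i = p1")
          case True
          hence "i \<in> K-{p,p2}" using pi pJ by auto
          thus ?thesis using m2 \<open>m1 = m2\<close> by blast
        next
          case False
          hence "i \<in> K-{p,p1}" using i J_def by auto
          thus ?thesis using m1 by blast
        qed
      qed
    qed
    hence "\<forall>v. \<exists>\<mu>. \<forall>i\<in>J. \<forall>a. al v i a - al v i (z i) = \<mu> * (al 0 i a - al 0 i (z i))" by blast
    hence "\<exists>mu. \<forall>v. \<forall>i\<in>J. \<forall>a. al v i a - al v i (z i) = mu v * (al 0 i a - al 0 i (z i))"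
      by (rule choice)
    then obtain mu where "\<forall>v. \<forall>i\<in>J. \<forall>a. al v i a - al v i (z i) = mu v * (al 0 i a - al 0 i (z i))" ..
    hence MU: "\<And>v i a. i \<in> J \<Longrightarrow> al v i a - al v i (z i) = mu v * (al 0 i a - al 0 i (z i))" by blast
    define S3 where "S3 = {p1, p2, p}"
    have "p \<noteq> p1" "p \<noteq> p2" using pi pJ by auto
    hence S3: "S3 \<subseteq> I" "card S3 = 3" using pi pJ KI p unfolding S3_def by auto
    obtain A B3 where R3: "Rep I f S3 z A B3" using H3[OF S3 z] by blast
    have bA: "\<And>i. i \<in> S3 \<Longrightarrow> bij (A i)" "bij B3" using R3 unfolding Rep_def by auto
    have pp: "p \<noteq> p1" "p \<noteq> p2" using pi pJ by auto
    have finS: "finite {p1,p2}" by simp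
    have S3eq: "S3 = insert p {p1,p2}" unfolding S3_def by auto
    have lam: "\<exists>c. (\<forall>s. B3 (inv_into UNIV (be v) ((\<Sum>i\<in>J. al v i (z i)) + s)) = A p1 (z p1) + A p2 (z p2) + A p v + c * s)
                  \<and> (\<forall>a. A p1 a - A p1 (z p1) = c * (al v p1 a - al v p1 (z p1)))" for v
    proof -
      define P where "P = {x\<in>PiE I (\<lambda>_. UNIV). (\<forall>i\<in>I-S3. x i = z i) \<and> x p = v}"
      define w where "w = z(p:=v)"
      have wPi: "w \<in> PiE I (\<lambda>_. UNIV)" unfolding w_def using z p KI by (intro upd_PiE) auto
      have wP1: "\<forall>a b. w(p1:=a, p2:=b) \<in> P"
        using wPi pi pJ pp unfolding P_def w_def S3_def by (auto intro!: upd_PiE)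
      have wP2: "\<forall>i\<in>{p1,p2}. \<forall>a. w(i:=a) \<in> P"
        using wPi pi pJ pp unfolding P_def w_def S3_def by (auto intro!: upd_PiE)
      have repA: "\<forall>x\<in>P. be v (f x) = (\<Sum>i\<in>{p1,p2}. al v i (x i)) + (\<Sum>i\<in>J-{p1,p2}. al v i (z i))"
      proof
        fix x assume x: "x \<in> P"
        have "\<forall>i\<in>I-J. x i = (z(p:=v)) i" using x pi pJ unfolding P_def S3_def J_def by auto
        hence "be v (f x) = (\<Sum>i\<in>J. al v i (x i))" using RJ[of v] x unfolding Rep_def P_def by blast
        also have "\<dots> = (\<Sum>i\<in>{p1,p2}. al v i (x i)) + (\<Sum>i\<in>J-{p1,p2}. al v i (z i))"
          using x pi pJ unfolding P_def S3_def by (intro sum_split finJ) auto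
        finally show "be v (f x) = (\<Sum>i\<in>{p1,p2}. al v i (x i)) + (\<Sum>i\<in>J-{p1,p2}. al v i (z i))" .
      qed
      have repB: "\<forall>x\<in>P. B3 (f x) = (\<Sum>i\<in>{p1,p2}. A i (x i)) + A p v"
      proof
        fix x assume x: "x \<in> P"
        have "\<forall>i\<in>I-S3. x i = z i" using x unfolding P_def by auto
        hence "B3 (f x) = (\<Sum>i\<in>S3. A i (x i))" using R3 x unfolding Rep_def P_def by blast
        also have "\<dots> = A p (x p) + (\<Sum>i\<in>{p1,p2}. A i (x i))"
          using pp by (subst S3eq) simp
        finally show "B3 (f x) = (\<Sum>i\<in>{p1,p2}. A i (x i)) + A p v" using x unfolding P_def by simp
      qed
      have sj: "surj (al v p1)" "surj (al v p2)" using bal(1) pi by (auto simp: bij_is_surj)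
      from uniq[OF pq finS _ _ pi(4) wP1 wP2 bij_is_inj[OF bal(2)] sj repA repB]
      obtain c where c1: "\<forall>s. B3 (inv_into UNIV (be v) ((\<Sum>i\<in>{p1,p2}. al v i (w i)) + (\<Sum>i\<in>J-{p1,p2}. al v i (z i)) + s))
           = (\<Sum>i\<in>{p1,p2}. A i (w i)) + A p v + c * s"
        and c2: "\<forall>i\<in>{p1,p2}. \<forall>a. A i a - A i (w i) = c * (al v i a - al v i (w i))" by auto
      have wz: "w p1 = z p1" "w p2 = z p2" using pp unfolding w_def by auto
      have e1: "(\<Sum>i\<in>{p1,p2}. al v i (w i)) + (\<Sum>i\<in>J-{p1,p2}. al v i (z i)) = (\<Sum>i\<in>J. al v i (z i))"
      proof -
        have "(\<Sum>i\<in>J. al v i (z i)) = (\<Sum>i\<in>{p1,p2}. al v i (z i)) + (\<Sum>i\<in>J-{p1,p2}. al v i (z i))"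
          using pi by (intro sum_split finJ) auto
        thus ?thesis using wz pi(4) by simp
      qed
      show ?thesis
      proof (intro exI[of _ c] conjI allI)
        fix s show "B3 (inv_into UNIV (be v) ((\<Sum>i\<in>J. al v i (z i)) + s)) = A p1 (z p1) + A p2 (z p2) + A p v + c * s"
          using c1[rule_format, of s] e1 wz pi(4) by simp
      next
        fix a show "A p1 a - A p1 (z p1) = c * (al v p1 a - al v p1 (z p1))" using c2 wz by auto
      qed
    qed
    hence "\<forall>v. \<exists>c. (\<forall>s. B3 (inv_into UNIV (be v) ((\<Sum>i\<in>J. al v i (z i)) + s)) = A p1 (z p1) + A p2 (z p2) + A p v + c * s)
                  \<and> (\<forall>a. A p1 a - A p1 (z p1) = c * (al v p1 a - al v p1 (z p1)))" by blast
    hence "\<exists>lam. \<forall>v. (\<forall>s. B3 (inv_into UNIV (be v) ((\<Sum>i\<in>J. al v i (z i)) + s)) = A p1 (z p1) + A p2 (z p2) + A p v + lam v * s)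
                  \<and> (\<forall>a. A p1 a - A p1 (z p1) = lam v * (al v p1 a - al v p1 (z p1)))" by (rule choice)
    then obtain lam where L1: "\<And>v s. B3 (inv_into UNIV (be v) ((\<Sum>i\<in>J. al v i (z i)) + s)) = A p1 (z p1) + A p2 (z p2) + A p v + lam v * s"
      and L2: "\<And>v a. A p1 a - A p1 (z p1) = lam v * (al v p1 a - al v p1 (z p1))" by blast
    define \<kappa> where "\<kappa> = lam 0 * mu 0"
    obtain a2 where a2: "al 0 p1 a2 - al 0 p1 (z p1) \<noteq> 0" using nonconst[OF bal(1)[OF pi(1)]] by blast
    have kap: "lam v * mu v = \<kappa>" for v
    proof -
      have "A p1 a2 - A p1 (z p1) = (lam v * mu v) * (al 0 p1 a2 - al 0 p1 (z p1))"
        using L2[where v=v and a=a2] MU[OF pi(1), of v a2] by (metis mult.assoc)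
      moreover have "A p1 a2 - A p1 (z p1) = (lam 0 * mu 0) * (al 0 p1 a2 - al 0 p1 (z p1))"
        using L2[where v=0 and a=a2] MU[OF pi(1), of 0 a2] by (metis mult.assoc)
      ultimately show ?thesis unfolding \<kappa>_def using a2 by simp
    qed
    have "p1 \<in> S3" unfolding S3_def by simp
    obtain a3 where a3: "A p1 a3 - A p1 (z p1) \<noteq> 0" using nonconst[OF bA(1)[OF \<open>p1 \<in> S3\<close>]] by blast
    have "\<kappa> \<noteq> 0"
    proof
      assume "\<kappa> = 0"
      have "A p1 a3 - A p1 (z p1) = (lam 0 * mu 0) * (al 0 p1 a3 - al 0 p1 (z p1))"
        using L2[where v=0 and a=a3] MU[OF pi(1), of 0 a3] by (metis mult.assoc)
      thus False using a3 \<open>\<kappa> = 0\<close> unfolding \<kappa>_def by simp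
    qed
    define \<alpha>f where "\<alpha>f = (\<lambda>i. if i = p then (\<lambda>t. A p t + (A p1 (z p1) + A p2 (z p2)))
                              else (\<lambda>t. \<kappa> * (al 0 i t + - al 0 i (z i))))"
    have "p \<in> S3" unfolding S3_def by simp
    have bf: "\<forall>i\<in>K. bij (\<alpha>f i)"
    proof
      fix i assume i: "i \<in> K"
      show "bij (\<alpha>f i)"
      proof (cases "i = p")
        case True thus ?thesis unfolding \<alpha>f_def using bij_transl[OF bA(1)[OF \<open>p \<in> S3\<close>]] by simp
      next
        case False
        hence "i \<in> J" using i J_def by auto
        hence "bij (\<lambda>t. \<kappa> * (al 0 i t + - al 0 i (z i)))"
          by (rule bij_scale[OF \<open>\<kappa> \<noteq> 0\<close> bij_transl[OF bal(1)]])
        thus ?thesis unfolding \<alpha>f_def using False by simp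
      qed
    qed
    have eq: "B3 (f x) = (\<Sum>i\<in>K. \<alpha>f i (x i))"
      if x: "x \<in> PiE I (\<lambda>_. UNIV)" "\<forall>i\<in>I-K. x i = z i" for x
    proof -
      define v where "v = x p"
      define SS where "SS = (\<Sum>i\<in>J. al 0 i (x i) - al 0 i (z i))"
      have "\<forall>i\<in>I-J. x i = (z(p:=v)) i" using x unfolding v_def J_def by auto
      hence h1: "be v (f x) = (\<Sum>i\<in>J. al v i (x i))" using RJ[of v] x unfolding Rep_def by blast
      have "(\<Sum>i\<in>J. al v i (x i)) = (\<Sum>i\<in>J. al v i (z i) + (al v i (x i) - al v i (z i)))" by simp
      also have "\<dots> = (\<Sum>i\<in>J. al v i (z i)) + (\<Sum>i\<in>J. al v i (x i) - al v i (z i))"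
        by (rule sum.distrib)
      also have "(\<Sum>i\<in>J. al v i (x i) - al v i (z i)) = (\<Sum>i\<in>J. mu v * (al 0 i (x i) - al 0 i (z i)))"
        by (rule sum.cong[OF refl MU])
      also have "\<dots> = mu v * SS"
        unfolding SS_def by (simp add: sum_distrib_left)
      finally have h2: "be v (f x) = (\<Sum>i\<in>J. al v i (z i)) + mu v * SS" using h1 by simp
      have fx: "inv_into UNIV (be v) (be v (f x)) = f x" using bij_is_inj[OF bal(2)] by simp
      hence "inv_into UNIV (be v) ((\<Sum>i\<in>J. al v i (z i)) + mu v * SS) = f x" unfolding h2 .
      hence "B3 (f x) = A p1 (z p1) + A p2 (z p2) + A p v + lam v * (mu v * SS)"
        using L1[where v=v and s="mu v * SS"] by simp
      also have "\<dots> = A p1 (z p1) + A p2 (z p2) + A p v + \<kappa> * SS"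
        using kap[of v] by (simp add: mult.assoc[symmetric])
      also have "(\<Sum>i\<in>K. \<alpha>f i (x i)) = \<alpha>f p (x p) + (\<Sum>i\<in>J. \<alpha>f i (x i))"
        unfolding J_def using p finK by (simp add: sum.remove)
      moreover have "(\<Sum>i\<in>J. \<alpha>f i (x i)) = \<kappa> * SS"
        unfolding SS_def sum_distrib_left using pJ(1) by (intro sum.cong) (auto simp: \<alpha>f_def)
      ultimately show ?thesis unfolding \<alpha>f_def v_def by (simp add: algebra_simps)
    qed
    show ?thesis unfolding Rep_def using bf bA(2) eq by blast
  qed
qed



lemma pt_eq:
  assumes "x \<in> PiE I (\<lambda>_. UNIV)" "\<forall>i\<in>I-S. x i = z i" "z \<in> PiE I (\<lambda>_. UNIV)" "S \<subseteq> I"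
  shows "(\<lambda>j. if j \<in> S then restrict x S j else restrict z (I-S) j) = x"
proof
  fix j show "(if j \<in> S then restrict x S j else restrict z (I-S) j) = x j"
    using assms by (cases "j \<in> I") (auto simp: PiE_def extensional_def)
qed

lemma tuple_to_rep:
  fixes g :: "(nat \<Rightarrow> 'a::field) \<Rightarrow> 'a"
  assumes fin: "finite I" and SI: "S \<subseteq> I" and z: "z \<in> PiE I (\<lambda>_. UNIV)"
    and lat: "latin_hypercube I g" and bb: "bij \<beta>" and ba: "\<forall>j\<in>S. bij (\<alpha> j)"
    and eq: "\<forall>y\<in>PiE S (\<lambda>_. UNIV). \<beta> (fix_args S (restrict z (I-S)) g y) = (\<Sum>j\<in>S. a j * \<alpha> j (y j))"
  shows "Rep I g S z (\<lambda>j t. a j * \<alpha> j t) \<beta>"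
proof -
  have finS: "finite S" using fin SI finite_subset by blast
  have E: "\<beta> (g x) = (\<Sum>j\<in>S. a j * \<alpha> j (x j))"
    if x: "x \<in> PiE I (\<lambda>_. UNIV)" "\<forall>i\<in>I-S. x i = z i" for x
  proof -
    have "restrict x S \<in> PiE S (\<lambda>_. UNIV)" by simp
    from eq[rule_format, OF this] have "\<beta> (g x) = (\<Sum>j\<in>S. a j * \<alpha> j (restrict x S j))"
      unfolding fix_args_def pt_eq[OF x z SI] .
    thus ?thesis by simp
  qed
  have nz: "a j \<noteq> 0" if j: "j \<in> S" for j
  proof
    assume a0: "a j = 0"
    have zt: "z(j:=t) \<in> PiE I (\<lambda>_. UNIV)" "\<forall>i\<in>I-S. (z(j:=t)) i = z i" for t
      using z j SI by (auto intro!: upd_PiE)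
    have "\<beta> (g (z(j:=t))) = (\<Sum>i\<in>S. a i * \<alpha> i (z i))" for t
    proof -
      have "\<beta> (g (z(j:=t))) = (\<Sum>i\<in>S. a i * \<alpha> i ((z(j:=t)) i))" by (rule E[OF zt])
      also have "\<dots> = (\<Sum>i\<in>S. a i * \<alpha> i (z i))"
        using sum_upd[OF finS j, of "\<lambda>i s. a i * \<alpha> i s" z t] a0 by simp
      finally show ?thesis .
    qed
    hence "\<beta> (g (z(j:=0))) = \<beta> (g (z(j:=1)))" by simp
    hence "g (z(j:=0)) = g (z(j:=1))" using bb by (simp add: bij_is_inj inj_eq)
    moreover have "bij (\<lambda>t. g (z(j:=t)))" using lat z j SI unfolding latin_hypercube_def by auto
    ultimately have "(0::'a) = 1" by (metis (no_types, lifting) bij_is_inj injD)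
    thus False by simp
  qed
  have "\<forall>j\<in>S. bij (\<lambda>t. a j * \<alpha> j t)" using ba nz bij_scale by blast
  thus ?thesis unfolding Rep_def using E bb by auto
qed

lemma cmp:
  fixes g :: "(nat \<Rightarrow> 'a::{field,finite}) \<Rightarrow> 'a"
  assumes pq: "prime q" "card (UNIV :: 'a set) = q"
    and fin: "finite I" and SI: "S \<subseteq> I" and jl: "j \<in> S" "l \<in> S" "j \<noteq> l"
    and z: "z \<in> PiE I (\<lambda>_. UNIV)"
    and R1: "Rep I g S z A B" and R2: "Rep I g I z \<alpha> \<beta>"
  shows "\<exists>c. \<forall>i\<in>S. \<forall>t. \<alpha> i t - \<alpha> i (z i) = c * (A i t - A i (z i))"
proof -
  define P where "P = {x\<in>PiE I (\<lambda>_. UNIV). \<forall>i\<in>I-S. x i = z i}"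
  have finS: "finite S" using fin SI finite_subset by blast
  have wP1: "\<forall>a b. z(j:=a, l:=b) \<in> P" using z jl SI unfolding P_def by (auto intro!: upd_PiE)
  have wP2: "\<forall>i\<in>S. \<forall>a. z(i:=a) \<in> P" using z SI unfolding P_def by (auto intro!: upd_PiE)
  have bA: "\<forall>i\<in>S. bij (A i)" "bij B" using R1 unfolding Rep_def by auto
  have repA: "\<forall>x\<in>P. B (g x) = (\<Sum>i\<in>S. A i (x i)) + 0" using R1 unfolding Rep_def P_def by auto
  have repB: "\<forall>x\<in>P. \<beta> (g x) = (\<Sum>i\<in>S. \<alpha> i (x i)) + (\<Sum>i\<in>I-S. \<alpha> i (z i))"
  proof
    fix x assume x: "x \<in> P"
    hence "\<beta> (g x) = (\<Sum>i\<in>I. \<alpha> i (x i))" using R2 unfolding Rep_def P_def by auto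
    also have "\<dots> = (\<Sum>i\<in>S. \<alpha> i (x i)) + (\<Sum>i\<in>I-S. \<alpha> i (z i))"
      using x unfolding P_def by (intro sum_split fin SI) auto
    finally show "\<beta> (g x) = (\<Sum>i\<in>S. \<alpha> i (x i)) + (\<Sum>i\<in>I-S. \<alpha> i (z i))" .
  qed
  have sj: "surj (A j)" "surj (A l)" using bA jl by (auto simp: bij_is_surj)
  from uniq[OF pq finS jl wP1 wP2 bij_is_inj[OF bA(2)] sj repA repB]
  show ?thesis by blast
qed



theorem theorem3:
  fixes q r k :: nat
    and fs :: "nat \<Rightarrow> (nat \<Rightarrow> 'a::{field,finite}) \<Rightarrow> 'a"
  assumes "prime q" and "card (UNIV :: 'a set) = q"
    and "r \<ge> 2" and "k \<ge> 4"
    and "\<forall>m \<in> {1..r}. latin_hypercube {1..k} (fs m)"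
    and "\<forall>i \<in> {1..r}. \<forall>j \<in> {1..r}. i \<noteq> j \<longrightarrow>
           (\<forall>S c. S \<subseteq> {1..k} \<and> card S = 3 \<and> c \<in> PiE ({1..k} - S) (\<lambda>_. UNIV) \<longrightarrow>
              linear_tuple S {i, j} (\<lambda>m. fix_args S c (fs m)))"
  shows "linear_tuple {1..k} {1..r} fs"
proof -
  note pq = assms(1,2)
  define I where "I = {1..k}"
  have fin: "finite I" unfolding I_def by simp
  have cI: "card I = k" unfolding I_def by simp
  note lat = assms(5)[folded I_def]
  note Hp = assms(6)[folded I_def]
  have pairrep: "\<exists>\<sigma> B a. (\<forall>n\<in>{m,m'}. Rep I (fs n) S z (\<lambda>j t. a n j * \<sigma> j t) (B n))"
    if m: "m \<in> {1..r}" "m' \<in> {1..r}" "m \<noteq> m'" and S: "S \<subseteq> I" "card S = 3"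
      and z: "z \<in> PiE I (\<lambda>_. UNIV)" for m m' S z
  proof -
    have c: "restrict z (I-S) \<in> PiE (I-S) (\<lambda>_. UNIV)" by simp
    have "linear_tuple S {m, m'} (\<lambda>n. fix_args S (restrict z (I-S)) (fs n))"
      using Hp m S c by blast
    then obtain \<sigma> :: "nat \<Rightarrow> 'a \<Rightarrow> 'a" and B :: "nat \<Rightarrow> 'a \<Rightarrow> 'a" and a :: "nat \<Rightarrow> nat \<Rightarrow> 'a" where bs: "\<forall>j\<in>S. bij (\<sigma> j)" and bB: "\<forall>n\<in>{m,m'}. bij (B n)"
      and eq: "\<forall>n\<in>{m,m'}. \<forall>y\<in>PiE S (\<lambda>_. UNIV). B n (fix_args S (restrict z (I-S)) (fs n) y) = (\<Sum>j\<in>S. a n j * \<sigma> j (y j))"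
      unfolding linear_tuple_def by blast
    have "Rep I (fs n) S z (\<lambda>j t. a n j * \<sigma> j t) (B n)" if n: "n \<in> {m,m'}" for n
      using tuple_to_rep[OF fin S(1) z _ _ bs, of "fs n" "B n" "a n"] lat bB eq n m by auto
    thus ?thesis by blast
  qed
  define z0 :: "nat \<Rightarrow> 'a" where "z0 = restrict (\<lambda>_. 0) I"
  have z0: "z0 \<in> PiE I (\<lambda>_. UNIV)" unfolding z0_def by simp
  have full: "\<exists>\<alpha> \<beta>. Rep I (fs m) I z0 \<alpha> \<beta>" if m: "m \<in> {1..r}" for m
  proof -
    define m' :: nat where "m' = (if m = 1 then 2 else 1)"
    have m': "m' \<in> {1..r}" "m \<noteq> m'" using m assms(3) unfolding m'_def by auto
    have H3: "\<exists>\<alpha> \<beta>. Rep I (fs m) S z \<alpha> \<beta>" if "S \<subseteq> I" "card S = 3" "z \<in> PiE I (\<lambda>_. UNIV)" for S z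
      using pairrep[OF m m'(1,2) that] by blast
    show ?thesis using rep_all[OF pq fin H3 cI _ _ z0] assms(4) by auto
  qed
  hence "\<forall>m\<in>{1..r}. \<exists>\<alpha> \<beta>. Rep I (fs m) I z0 \<alpha> \<beta>" by blast
  hence "\<exists>al. \<forall>m\<in>{1..r}. \<exists>\<beta>. Rep I (fs m) I z0 (al m) \<beta>" by (rule bchoice)
  then obtain al where "\<forall>m\<in>{1..r}. \<exists>\<beta>. Rep I (fs m) I z0 (al m) \<beta>" ..
  hence "\<exists>be. \<forall>m\<in>{1..r}. Rep I (fs m) I z0 (al m) (be m)" by (rule bchoice)
  then obtain be where RF: "\<forall>m\<in>{1..r}. Rep I (fs m) I z0 (al m) (be m)" ..
  have one: "1 \<in> {1..r}" using assms(3) by simp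
  have kap: "\<exists>\<kappa>. \<forall>t. al m i t - al m i (z0 i) = \<kappa> * (al 1 i t - al 1 i (z0 i))"
    if m: "m \<in> {1..r}" and i: "i \<in> I" for m i
  proof (cases "m = 1")
    case True thus ?thesis by (intro exI[of _ 1]) simp
  next
    case False
    have c3: "3 \<le> card (I - {i})" using cI i fin assms(4) by simp
    have fD: "finite (I - {i})" using fin by simp
    from fD c3 obtain a b c where abc: "a \<in> I - {i}" "b \<in> I - {i}" "c \<in> I - {i}" "a \<noteq> b" "b \<noteq> c" "a \<noteq> c"
      by (rule three_elems)
    define S where "S = {i, a, b}"
    have S: "S \<subseteq> I" "card S = 3" "i \<in> S" "a \<in> S" "i \<noteq> a" using abc i unfolding S_def by auto
    obtain \<sigma> :: "nat \<Rightarrow> 'a \<Rightarrow> 'a" and B :: "nat \<Rightarrow> 'a \<Rightarrow> 'a" and aa :: "nat \<Rightarrow> nat \<Rightarrow> 'a" where PR: "\<forall>n\<in>{1,m}. Rep I (fs n) S z0 (\<lambda>j t. aa n j * \<sigma> j t) (B n)"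
    proof -
      have "1 \<noteq> m" using False by simp
      from pairrep[OF one m this S(1,2) z0] show ?thesis using that by blast
    qed
    have R1: "Rep I (fs 1) S z0 (\<lambda>j t. aa 1 j * \<sigma> j t) (B 1)" using PR by simp
    have Rm: "Rep I (fs m) S z0 (\<lambda>j t. aa m j * \<sigma> j t) (B m)" using PR by simp
    have F1: "Rep I (fs 1) I z0 (al 1) (be 1)" using RF[rule_format, OF one] .
    have Fm: "Rep I (fs m) I z0 (al m) (be m)" using RF[rule_format, OF m] .
    obtain c1 where c1: "\<forall>j\<in>S. \<forall>t. al 1 j t - al 1 j (z0 j) = c1 * (aa 1 j * \<sigma> j t - aa 1 j * \<sigma> j (z0 j))"
      using cmp[OF pq fin S(1) S(3,4,5) z0 R1 F1] by blast
    obtain cm where cm: "\<forall>j\<in>S. \<forall>t. al m j t - al m j (z0 j) = cm * (aa m j * \<sigma> j t - aa m j * \<sigma> j (z0 j))"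
      using cmp[OF pq fin S(1) S(3,4,5) z0 Rm Fm] by blast
    have "bij (al 1 i)" using F1 i unfolding Rep_def by simp
    from nonconst[OF this, of "z0 i"] obtain t0 where t0: "al 1 i t0 - al 1 i (z0 i) \<noteq> 0" ..
    have e1: "al 1 i t - al 1 i (z0 i) = (c1 * aa 1 i) * (\<sigma> i t - \<sigma> i (z0 i))" for t
    proof -
      have "al 1 i t - al 1 i (z0 i) = c1 * (aa 1 i * \<sigma> i t - aa 1 i * \<sigma> i (z0 i))" using c1[rule_format, OF S(3)] .
      thus ?thesis by (simp add: algebra_simps)
    qed
    have e2: "al m i t - al m i (z0 i) = (cm * aa m i) * (\<sigma> i t - \<sigma> i (z0 i))" for t
    proof -
      have "al m i t - al m i (z0 i) = cm * (aa m i * \<sigma> i t - aa m i * \<sigma> i (z0 i))" using cm[rule_format, OF S(3)] .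
      thus ?thesis by (simp add: algebra_simps)
    qed
    have "c1 * aa 1 i \<noteq> 0" using e1[of t0] t0 by auto
    show ?thesis
    proof (intro exI[of _ "(cm * aa m i) / (c1 * aa 1 i)"] allI)
      fix t
      show "al m i t - al m i (z0 i) = (cm * aa m i) / (c1 * aa 1 i) * (al 1 i t - al 1 i (z0 i))"
        unfolding e1 e2 using \<open>c1 * aa 1 i \<noteq> 0\<close> by simp
    qed
  qed
  have "\<forall>m\<in>{1..r}. \<exists>km. \<forall>i\<in>I. \<forall>t. al m i t - al m i (z0 i) = km i * (al 1 i t - al 1 i (z0 i))"
  proof
    fix m assume m: "m \<in> {1..r}"
    have "\<forall>i\<in>I. \<exists>\<kappa>. \<forall>t. al m i t - al m i (z0 i) = \<kappa> * (al 1 i t - al 1 i (z0 i))"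
      using kap[OF m] by blast
    thus "\<exists>km. \<forall>i\<in>I. \<forall>t. al m i t - al m i (z0 i) = km i * (al 1 i t - al 1 i (z0 i))"
      by (rule bchoice)
  qed
  hence "\<exists>K. \<forall>m\<in>{1..r}. \<forall>i\<in>I. \<forall>t. al m i t - al m i (z0 i) = K m i * (al 1 i t - al 1 i (z0 i))"
    by (rule bchoice)
  then obtain K where KK: "\<forall>m\<in>{1..r}. \<forall>i\<in>I. \<forall>t. al m i t - al m i (z0 i) = K m i * (al 1 i t - al 1 i (z0 i))" ..
  define C where "C m = (\<Sum>i\<in>I. al m i (z0 i) - K m i * al 1 i (z0 i))" for m
  define \<beta>' where "\<beta>' m y = be m y + - C m" for m y
  have b1: "\<forall>j\<in>I. bij (al 1 j)" using RF one unfolding Rep_def by auto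
  have b2: "\<forall>m\<in>{1..r}. bij (\<beta>' m)" unfolding \<beta>'_def using RF bij_transl unfolding Rep_def by blast
  have b3: "\<forall>m\<in>{1..r}. \<forall>x\<in>PiE I (\<lambda>_. UNIV::'a set). \<beta>' m (fs m x) = (\<Sum>j\<in>I. K m j * al 1 j (x j))"
  proof (intro ballI)
    fix m and x :: "nat \<Rightarrow> 'a" assume m: "m \<in> {1..r}" and x: "x \<in> PiE I (\<lambda>_. UNIV)"
    have "be m (fs m x) = (\<Sum>i\<in>I. al m i (x i))" using RF m x unfolding Rep_def by auto
    also have "\<dots> = (\<Sum>i\<in>I. K m i * al 1 i (x i) + (al m i (z0 i) - K m i * al 1 i (z0 i)))"
    proof (rule sum.cong[OF refl])
      fix i assume i: "i \<in> I"
      have "al m i (x i) - al m i (z0 i) = K m i * (al 1 i (x i) - al 1 i (z0 i))" using KK m i by blast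
      thus "al m i (x i) = K m i * al 1 i (x i) + (al m i (z0 i) - K m i * al 1 i (z0 i))"
        by (simp add: algebra_simps)
    qed
    also have "\<dots> = (\<Sum>i\<in>I. K m i * al 1 i (x i)) + C m" unfolding C_def by (rule sum.distrib)
    finally show "\<beta>' m (fs m x) = (\<Sum>j\<in>I. K m j * al 1 j (x j))" unfolding \<beta>'_def by simp
  qed
  show ?thesis
    unfolding linear_tuple_def I_def[symmetric]
    by (intro exI[of _ "al 1"] exI[of _ \<beta>'] exI[of _ K] conjI) (use b1 b2 b3 in auto)
qed


end
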